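(* Let $f:\mathbb{R}\to\mathbb{R}$ be a Topologically Anosov homeomorphism. Then $f$ has exactly one fixed point.
   Context: A homeomorphism $f:\mathbb{R}\to\mathbb{R}$ is Topologically Anosov if: (i) there is a continuous strictly positive $\epsilon:\mathbb{R}\to\mathbb{R}$ such that for all $x\neq y$ there is $k\in\mathbb{Z}$ with $|f^k(x)-f^k(y)|>\epsilon(f^k(x))$; and (ii) for every continuous strictly positive $\epsilon:\mathbb{R}\to\mathbb{R}$ there is a continuous strictly positive $\delta:\mathbb{R}\to\mathbb{R}$ such that every $\delta$-pseudo-orbit (a sequence $(x_n)_{n\in\mathbb{Z}}$ with $|f(x_n)-x_{n+1}|<\delta(f(x_n))$) is $\epsilon$-shadowed by an orbit (there is $x$ with $|x_n-f^n(x)|<\epsilon(x_n)$ for all $n$). *)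

theory Defs
  imports "HOL-Analysis.Analysis"
begin

definition zpow :: "(real \<Rightarrow> real) \<Rightarrow> int \<Rightarrow> real \<Rightarrow> real" where
  "zpow f k = (if 0 \<le> k then f ^^ nat k else inv f ^^ nat (- k))"

definition homeo_R :: "(real \<Rightarrow> real) \<Rightarrow> bool" where
  "homeo_R f \<longleftrightarrow> (\<exists>g. homeomorphism UNIV UNIV f g)"

definition pos_cont :: "(real \<Rightarrow> real) \<Rightarrow> bool" where
  "pos_cont e \<longleftrightarrow> continuous_on UNIV e \<and> (\<forall>x. 0 < e x)"

definition expansive_var :: "(real \<Rightarrow> real) \<Rightarrow> bool" where
  "expansive_var f \<longleftrightarrow> (\<exists>e. pos_cont e \<and>
     (\<forall>x y. x \<noteq> y \<longrightarrow> (\<exists>k::int. \<bar>zpow f k x - zpow f k y\<bar> > e (zpow f k x))))"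

definition pseudo_orbit :: "(real \<Rightarrow> real) \<Rightarrow> (real \<Rightarrow> real) \<Rightarrow> (int \<Rightarrow> real) \<Rightarrow> bool" where
  "pseudo_orbit f d xs \<longleftrightarrow> (\<forall>n. \<bar>f (xs n) - xs (n + 1)\<bar> < d (f (xs n)))"

definition shadowed :: "(real \<Rightarrow> real) \<Rightarrow> (real \<Rightarrow> real) \<Rightarrow> (int \<Rightarrow> real) \<Rightarrow> bool" where
  "shadowed f e xs \<longleftrightarrow> (\<exists>x. \<forall>n. \<bar>xs n - zpow f n x\<bar> < e (xs n))"

definition shadowing_var :: "(real \<Rightarrow> real) \<Rightarrow> bool" where
  "shadowing_var f \<longleftrightarrow> (\<forall>e. pos_cont e \<longrightarrow>
     (\<exists>d. pos_cont d \<and> (\<forall>xs. pseudo_orbit f d xs \<longrightarrow> shadowed f e xs)))"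

definition topologically_anosov :: "(real \<Rightarrow> real) \<Rightarrow> bool" where
  "topologically_anosov f \<longleftrightarrow> homeo_R f \<and> expansive_var f \<and> shadowing_var f"

end

theory Submission
  imports Defs
begin


lemma inv_eqI: assumes "\<And>x. g (f x) = x" "\<And>y. f (g y) = y" shows "inv f = g"
  using assms by (rule inv_equality)

lemma funpow_cancel: fixes f :: "'a \<Rightarrow> 'a" assumes "\<And>x. g (f x) = x" shows "(g ^^ n) ((f ^^ n) x) = x"
proof (induction n arbitrary: x)
  case (Suc n)
  have "(g ^^ Suc n) ((f ^^ Suc n) x) = (g ^^ n) (g (f ((f ^^ n) x)))"
    by (metis funpow_Suc_right comp_apply funpow.simps(2))
  also have "\<dots> = x" using assms Suc by simp
  finally show ?case .
qed simp

lemma zpow_S1: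
  assumes "\<And>x. inv f (f x) = x" "\<And>y. f (inv f y) = y"
  shows "zpow f (k+1) x = f (zpow f k x)"
proof (cases "0 \<le> k")
  case True
  define j where "j = nat k"
  have j: "k = int j" using True by (simp add: j_def)
  then show ?thesis by (simp add: zpow_def nat_add_distrib)
next
  case False
  define j where "j = nat (-k-1)"
  have j: "k = - int j - 1" using False by (simp add: j_def)
  show ?thesis
  proof (cases j)
    case 0 then show ?thesis using j assms by (simp add: zpow_def)
  next
    case (Suc i)
    have "nat (- k) = Suc j" "nat (- (k+1)) = j" "\<not> 0 \<le> k+1" using j Suc by auto
    then show ?thesis using False assms by (simp add: zpow_def)
  qed
qed

lemma zpow_S2:
  assumes "\<And>x. inv f (f x) = x" "\<And>y. f (inv f y) = y"
  shows "zpow f k (f x) = zpow f (k+1) x"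
proof (cases "0 \<le> k")
  case True
  define j where "j = nat k"
  have j: "k = int j" using True by (simp add: j_def)
  have "(f ^^ j) (f x) = (f ^^ Suc j) x" by (simp only: funpow_Suc_right comp_apply)
  then show ?thesis using j by (simp add: zpow_def nat_add_distrib)
next
  case False
  define j where "j = nat (-k-1)"
  have j: "k = - int j - 1" using False by (simp add: j_def)
  have e: "(inv f ^^ Suc j) (f x) = (inv f ^^ j) x" by (simp only: funpow_Suc_right comp_apply assms)
  show ?thesis
  proof (cases j)
    case 0 then show ?thesis using j assms by (simp add: zpow_def)
  next
    case (Suc i)
    have "nat (- k) = Suc j" "nat (- (k+1)) = j" "\<not> 0 \<le> k+1" using j Suc by auto
    then show ?thesis using False e by (simp add: zpow_def)
  qed
qed

lemma zpow_S3:
  assumes "\<And>x. inv f (f x) = x" "\<And>y. f (inv f y) = y"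
  shows "zpow f (-k) (zpow f k x) = x"
proof (cases "0 \<le> k")
  case True
  show ?thesis
  proof (cases "k = 0")
    case True then show ?thesis by (simp add: zpow_def)
  next
    case False
    then have "zpow f (-k) (zpow f k x) = (inv f ^^ nat k) ((f ^^ nat k) x)"
      using True by (simp add: zpow_def)
    also have "\<dots> = x" by (rule funpow_cancel) (rule assms(1))
    finally show ?thesis .
  qed
next
  case False
  then have "zpow f (-k) (zpow f k x) = (f ^^ nat (-k)) ((inv f ^^ nat (-k)) x)"
    by (simp add: zpow_def)
  also have "\<dots> = x" by (rule funpow_cancel) (rule assms(2))
  finally show ?thesis .
qed

lemma zpow_0[simp]: "zpow f 0 x = x" by (simp add: zpow_def)

lemma funpow_cont: fixes h :: "real \<Rightarrow> real" assumes "continuous_on UNIV h" shows "continuous_on UNIV (h ^^ n)"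
proof (induction n)
  case 0 then show ?case by (simp add: id_def continuous_on_id')
next
  case (Suc n)
  have "continuous_on UNIV (h \<circ> (h ^^ n))"
    by (rule continuous_on_compose[OF Suc.IH continuous_on_subset[OF assms subset_UNIV]])
  then show ?case by (simp only: funpow.simps(2))
qed

lemma zpow_cont: assumes "continuous_on UNIV f" "continuous_on UNIV (inv f)"
  shows "continuous_on UNIV (zpow f k)"
  using funpow_cont[OF assms(1)] funpow_cont[OF assms(2)] by (simp add: zpow_def)

lemma funpow_smono: fixes h :: "real \<Rightarrow> real" assumes "\<And>u v. u < v \<Longrightarrow> h u < (h v::real)" and "u < v"
  shows "(h ^^ n) u < (h ^^ n) v"
  by (induction n) (simp_all add: assms)

lemma funpow_fix: fixes h :: "real \<Rightarrow> real" shows "h p = p \<Longrightarrow> (h ^^ n) p = p"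
  by (induction n) auto



lemma cont_inj_incr:
  fixes f :: "real \<Rightarrow> real"
  assumes c: "continuous_on UNIV f" and i: "inj f" and f01: "f 0 < f 1" and uv: "u < v"
  shows "f u < f v"
proof (rule ccontr)
  assume "\<not> f u < f v"
  then have "f v < f u" using i uv by (metis linorder_neqE_linordered_idom inj_eq less_irrefl)
  define H where "H t = f ((1-t) * v + t) - f ((1-t) * u)" for t :: real
  have "continuous_on {0..1} H" unfolding H_def
    by (intro continuous_intros continuous_on_compose2[OF c]) auto
  moreover have "H 0 \<le> 0" "0 \<le> H 1" using \<open>f v < f u\<close> f01 by (auto simp: H_def)
  ultimately obtain t where t: "0 \<le> t" "t \<le> 1" "H t = 0" using IVT'[of H 0 0 1] by auto
  then have "f ((1-t) * v + t) = f ((1-t) * u)" by (simp add: H_def)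
  then have "(1-t) * v + t = (1-t) * u" using i by (simp add: inj_eq)
  moreover have "(1-t) * u \<le> (1-t) * v" using t uv by (simp add: mult_left_mono)
  ultimately show False using t uv by (cases "t = 0") auto
qed

lemma funpow_monoseq:
  fixes h :: "real \<Rightarrow> real"
  assumes "mono h" shows "monoseq (\<lambda>n. (h ^^ n) a)"
proof (cases "a \<le> h a")
  case True
  have "(h ^^ n) a \<le> (h ^^ Suc n) a" for n
  proof (induction n)
    case 0 then show ?case using True by simp
  next
    case (Suc n) then show ?case using assms by (simp add: monoD)
  qed
  then show ?thesis by (simp add: monoseq_Suc)
next
  case False
  have "(h ^^ Suc n) a \<le> (h ^^ n) a" for n
  proof (induction n)
    case 0 then show ?case using False by simp
  next
    case (Suc n) then show ?case using assms by (simp add: monoD)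
  qed
  then show ?thesis by (simp add: monoseq_Suc)
qed

lemma bdd_mono_fix:
  fixes h :: "real \<Rightarrow> real"
  assumes "mono h" "continuous_on UNIV h" "\<forall>n. \<bar>(h ^^ n) a\<bar> \<le> B"
  shows "\<exists>L. h L = L"
proof -
  let ?b = "\<lambda>n. (h ^^ n) a"
  have "Bseq ?b" using assms(3) by (intro BseqI'[where K=B]) auto
  then have "convergent ?b" using funpow_monoseq[OF assms(1)] Bseq_monoseq_convergent by blast
  then obtain L where L: "?b \<longlonglongrightarrow> L" by (auto simp: convergent_def)
  then have "(\<lambda>n. ?b (Suc n)) \<longlonglongrightarrow> L" by (rule LIMSEQ_Suc)
  moreover have "(\<lambda>n. h (?b n)) \<longlonglongrightarrow> h L"
    using L assms(2) by (intro isCont_tendsto_compose[of L h]) (auto simp: continuous_on_eq_continuous_at)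
  ultimately have "h L = L" using LIMSEQ_unique by auto
  then show ?thesis by blast
qed

lemma escape:
  fixes h :: "real \<Rightarrow> real"
  assumes "mono h" "continuous_on UNIV h" "\<forall>x. h x \<noteq> x"
  shows "\<exists>N. \<forall>n\<ge>N. R < \<bar>(h ^^ n) a\<bar>"
proof -
  let ?b = "\<lambda>n. (h ^^ n) a"
  have unb: "\<exists>n. B < \<bar>?b n\<bar>" for B
    using bdd_mono_fix[OF assms(1,2), of a B] assms(3) by (meson not_le)
  from funpow_monoseq[OF assms(1), of a] show ?thesis unfolding monoseq_def
  proof
    assume inc: "\<forall>m n. m \<le> n \<longrightarrow> ?b m \<le> ?b n"
    obtain N where N: "\<bar>R\<bar> + \<bar>?b 0\<bar> < \<bar>?b N\<bar>" using unb by blast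
    have "?b 0 \<le> ?b N" using inc[rule_format, of 0 N] by simp
    then have "\<bar>R\<bar> < ?b N" using N by linarith
    then show ?thesis using inc by (intro exI[of _ N]) (smt (verit))
  next
    assume dec: "\<forall>m n. m \<le> n \<longrightarrow> ?b n \<le> ?b m"
    obtain N where N: "\<bar>R\<bar> + \<bar>?b 0\<bar> < \<bar>?b N\<bar>" using unb by blast
    have "?b N \<le> ?b 0" using dec[rule_format, of 0 N] by simp
    then have "?b N < - \<bar>R\<bar>" using N by linarith
    then show ?thesis using dec by (intro exI[of _ N]) (smt (verit))
  qed
qed



lemma mk_e:
  fixes \<eta> orb :: "int \<Rightarrow> real"
  assumes pos: "\<forall>n. \<eta> n > 0" and fin: "\<forall>R. finite {n. \<bar>orb n\<bar> \<le> R}"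
  shows "\<exists>e. pos_cont e \<and> (\<forall>n. e (orb n) \<le> \<eta> n) \<and> (\<forall>w w'. e w \<le> e w' + \<bar>w - w'\<bar>/2)"
proof -
  define T where "T w = insert 1 (range (\<lambda>n. \<eta> n + \<bar>w - orb n\<bar>/2))" for w
  define e where "e w = Inf (T w)" for w
  have bdd: "bdd_below (T w)" for w
  proof (rule bdd_belowI[of _ 0])
    fix t assume "t \<in> T w"
    then consider "t = 1" | n where "t = \<eta> n + \<bar>w - orb n\<bar>/2" by (auto simp: T_def)
    then show "0 \<le> t"
    proof cases
      case 1 then show ?thesis by simp
    next
      case (2 n) then show ?thesis using pos[rule_format, of n] by (simp add: add_nonneg_nonneg less_imp_le)
    qed
  qed
  have low: "t \<in> T w \<Longrightarrow> e w \<le> t" for t w unfolding e_def by (rule cInf_lower[OF _ bdd])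
  have ne: "T w \<noteq> {}" for w by (simp add: T_def)
  have lip: "e w \<le> e w' + \<bar>w - w'\<bar>/2" for w w'
  proof -
    have "e w - \<bar>w - w'\<bar>/2 \<le> e w'" unfolding e_def[of w']
    proof (rule cInf_greatest[OF ne])
      fix t assume "t \<in> T w'"
      then consider "t = 1" | n where "t = \<eta> n + \<bar>w' - orb n\<bar>/2" by (auto simp: T_def)
      then show "e w - \<bar>w - w'\<bar>/2 \<le> t"
      proof cases
        case 1 then have "e w \<le> 1" using low[of 1 w] by (simp add: T_def)
        then show ?thesis using 1 by argo
      next
        case (2 n)
        have "e w \<le> \<eta> n + \<bar>w - orb n\<bar>/2" by (rule low) (auto simp: T_def)
        then show ?thesis using 2 by argo
      qed
    qed
    then show ?thesis by linarith
  qed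
  have epos: "0 < e w" for w
  proof -
    define A where "A = {n. \<bar>orb n\<bar> \<le> \<bar>w\<bar> + 2}"
    have fA: "finite A" using fin by (simp add: A_def)
    define m where "m = Min (insert 1 (\<eta> ` A))"
    have m0: "0 < m" unfolding m_def using fA pos by (subst Min_gr_iff) auto
    have m1: "m \<le> 1" unfolding m_def using fA by (intro Min_le) auto
    have m2: "n \<in> A \<Longrightarrow> m \<le> \<eta> n" for n unfolding m_def using fA by (intro Min_le) auto
    have "m \<le> e w" unfolding e_def
    proof (rule cInf_greatest[OF ne])
      fix t assume "t \<in> T w"
      then consider "t = 1" | n where "t = \<eta> n + \<bar>w - orb n\<bar>/2" by (auto simp: T_def)
      then show "m \<le> t"
      proof cases
        case 1 then show ?thesis using m1 by simp
      next
        case (2 n)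
        show ?thesis
        proof (cases "n \<in> A")
          case True then show ?thesis using m2[OF True] 2 by argo
        next
          case False
          then have "\<bar>w - orb n\<bar> > 2" by (auto simp: A_def)
          then show ?thesis using 2 m1 pos[rule_format, of n] by argo
        qed
      qed
    qed
    then show ?thesis using m0 by linarith
  qed
  have cont: "continuous_on UNIV e"
    unfolding continuous_on_iff
  proof (intro ballI allI impI)
    fix x :: real and \<epsilon> :: real assume "0 < \<epsilon>"
    show "\<exists>\<delta>>0. \<forall>x'\<in>UNIV. dist x' x < \<delta> \<longrightarrow> dist (e x') (e x) < \<epsilon>"
    proof (intro exI[of _ \<epsilon>] conjI ballI impI)
      fix x' assume "dist x' x < \<epsilon>"
      then show "dist (e x') (e x) < \<epsilon>" using lip[of x' x] lip[of x x']
        by (simp add: dist_real_def abs_minus_commute) argo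
    qed fact
  qed
  have "\<forall>n. e (orb n) \<le> \<eta> n"
  proof
    fix n have "e (orb n) \<le> \<eta> n + \<bar>orb n - orb n\<bar>/2" unfolding T_def by (rule low[unfolded T_def], rule insertI2, rule rangeI)
    then show "e (orb n) \<le> \<eta> n" by simp
  qed
  then show ?thesis using cont epos lip unfolding pos_cont_def by blast
qed



lemma small_zero:
  fixes x :: real assumes "\<forall>m::nat. \<bar>x\<bar> < 1 / (real m + 1)" shows "x = 0"
proof (rule ccontr)
  assume "x \<noteq> 0"
  then have "0 < \<bar>x\<bar>" by simp
  then obtain m where "inverse (real (Suc m)) < \<bar>x\<bar>" using reals_Archimedean by blast
  then show False using assms[rule_format, of m] by (simp add: inverse_eq_divide add.commute)
qed

lemma exist_incr:
  fixes f g :: "real \<Rightarrow> real"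
  assumes hom: "homeomorphism UNIV UNIV f g"
    and inc: "\<And>u v. u < v \<Longrightarrow> f u < f v"
    and sh: "shadowing_var f"
  shows "\<exists>p. f p = p"
proof (rule ccontr)
  assume nf: "\<not> (\<exists>p. f p = p)"
  from hom have gf: "\<And>x. g (f x) = x" and fg: "\<And>y. f (g y) = y"
    and cf: "continuous_on UNIV f" and cg: "continuous_on UNIV g"
    by (auto simp: homeomorphism_def)
  have ig: "inv f = g" using gf fg by (rule inv_equality)
  have if1: "\<And>x. inv f (f x) = x" "\<And>y. f (inv f y) = y" using ig gf fg by auto
  have ginc: "g u < g v" if "u < v" for u v
  proof (rule ccontr)
    assume "\<not> g u < g v"
    then have "g v \<le> g u" by simp
    then have "f (g v) \<le> f (g u)" using inc by (cases "g v = g u") (auto simp: less_imp_le)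
    then show False using that fg by simp
  qed
  have mf: "mono f" unfolding mono_def using inc by (metis less_eq_real_def)
  have mg: "mono g" unfolding mono_def using ginc by (metis less_eq_real_def)
  have nff: "\<forall>x. f x \<noteq> x" using nf by blast
  have nfg: "\<forall>x. g x \<noteq> x" using nf fg by metis
  define orb where "orb n = zpow f n 0" for n
  have fin: "\<forall>R. finite {n. \<bar>orb n\<bar> \<le> R}"
  proof
    fix R
    obtain N1 where N1: "\<forall>n\<ge>N1. R < \<bar>(f ^^ n) 0\<bar>" using escape[OF mf cf nff] by blast
    obtain N2 where N2: "\<forall>n\<ge>N2. R < \<bar>(g ^^ n) 0\<bar>" using escape[OF mg cg nfg] by blast
    have "{n. \<bar>orb n\<bar> \<le> R} \<subseteq> {- int N2 .. int N1}"
    proof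
      fix n assume n: "n \<in> {n. \<bar>orb n\<bar> \<le> R}"
      show "n \<in> {- int N2 .. int N1}"
      proof (cases "0 \<le> n")
        case True
        then have "\<bar>(f ^^ nat n) 0\<bar> \<le> R" using n by (simp add: orb_def zpow_def)
        then have "nat n < N1" using N1 by (meson not_le)
        then show ?thesis using True by auto
      next
        case False
        then have "\<bar>(g ^^ nat (-n)) 0\<bar> \<le> R" using n by (simp add: orb_def zpow_def ig)
        then have "nat (-n) < N2" using N2 by (meson not_le)
        then show ?thesis using False by auto
      qed
    qed
    then show "finite {n. \<bar>orb n\<bar> \<le> R}" by (rule finite_subset) simp
  qed
  have cz: "\<And>k. continuous_on UNIV (zpow f k)" using zpow_cont cf cg ig by simp
  have "\<forall>n. \<exists>\<eta>>0. \<forall>v. \<bar>v - orb n\<bar> < 2*\<eta> \<longrightarrow> \<bar>zpow f (-n) v\<bar> < 1/(real_of_int \<bar>n\<bar> + 1)"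
  proof
    fix n :: int
    have "0 < 1/(real_of_int \<bar>n\<bar> + 1)" by simp
    then obtain d where d: "d > 0" "\<forall>x'. dist x' (orb n) < d \<longrightarrow> dist (zpow f (-n) x') (zpow f (-n) (orb n)) < 1/(real_of_int \<bar>n\<bar> + 1)"
      using cz[of "-n"] unfolding continuous_on_iff by blast
    have z: "zpow f (-n) (orb n) = 0" unfolding orb_def by (rule zpow_S3[OF if1])
    show "\<exists>\<eta>>0. \<forall>v. \<bar>v - orb n\<bar> < 2*\<eta> \<longrightarrow> \<bar>zpow f (-n) v\<bar> < 1/(real_of_int \<bar>n\<bar> + 1)"
      using d z by (intro exI[of _ "d/2"]) (auto simp: dist_real_def)
  qed
  then obtain \<eta> where \<eta>: "\<forall>n. \<eta> n > 0 \<and> (\<forall>v. \<bar>v - orb n\<bar> < 2 * \<eta> n \<longrightarrow> \<bar>zpow f (-n) v\<bar> < 1/(real_of_int \<bar>n\<bar> + 1))"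
    by metis
  obtain e where e: "pos_cont e" "\<forall>n. e (orb n) \<le> \<eta> n" "\<forall>w w'. e w \<le> e w' + \<bar>w - w'\<bar>/2"
    using mk_e[of \<eta> orb] \<eta> fin by blast
  obtain \<delta> where \<delta>: "pos_cont \<delta>" "\<forall>xs. pseudo_orbit f \<delta> xs \<longrightarrow> shadowed f e xs"
    using sh e(1) unfolding shadowing_var_def by blast
  have dpos: "\<And>w. 0 < \<delta> w" using \<delta>(1) by (simp add: pos_cont_def)
  define z where "z = f 0 + \<delta> (f 0)/2"
  define y where "y = g z"
  have fy: "f y = z" by (simp add: y_def fg)
  have y0: "y \<noteq> 0"
  proof
    assume "y = 0" then have "z = f 0" using fy by simp
    then show False using dpos[of "f 0"] by (simp add: z_def)
  qed
  define xs where "xs n = (if n \<le> 0 then zpow f n 0 else zpow f (n-1) z)" for n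
  have "pseudo_orbit f \<delta> xs" unfolding pseudo_orbit_def
  proof
    fix n :: int
    consider "n < 0" | "n = 0" | "n > 0" by linarith
    then show "\<bar>f (xs n) - xs (n + 1)\<bar> < \<delta> (f (xs n))"
    proof cases
      case 1
      then have "xs (n+1) = f (xs n)" by (simp add: xs_def zpow_S1[OF if1])
      then show ?thesis using dpos by simp
    next
      case 2
      then show ?thesis using dpos[of "f 0"] by (simp add: xs_def z_def)
    next
      case 3
      have "zpow f (n - 1 + 1) z = f (zpow f (n-1) z)" by (rule zpow_S1[OF if1])
      then have "xs (n+1) = f (xs n)" using 3 by (simp add: xs_def)
      then show ?thesis using dpos by simp
    qed
  qed
  then obtain x where x: "\<forall>n. \<bar>xs n - zpow f n x\<bar> < e (xs n)"
    using \<delta>(2) unfolding shadowed_def by blast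
  have "\<bar>x\<bar> < 1 / (real m + 1)" for m :: nat
  proof -
    let ?n = "- int m"
    have "xs ?n = orb ?n" by (simp add: xs_def orb_def)
    then have "\<bar>orb ?n - zpow f ?n x\<bar> < e (orb ?n)" using x[rule_format, of ?n] by simp
    then have "\<bar>orb ?n - zpow f ?n x\<bar> < \<eta> ?n" using e(2)[rule_format, of ?n] by linarith
    then have "\<bar>zpow f ?n x - orb ?n\<bar> < 2 * \<eta> ?n" using \<eta> by (smt (verit))
    then have "\<bar>zpow f (- ?n) (zpow f ?n x)\<bar> < 1/(real_of_int \<bar>?n\<bar> + 1)" using \<eta> by blast
    moreover have "zpow f (- ?n) (zpow f ?n x) = x" by (rule zpow_S3[OF if1])
    ultimately show ?thesis by simp
  qed
  then have x0: "x = 0" using small_zero by blast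
  have "\<bar>y\<bar> < 1 / (real m + 1)" for m :: nat
  proof -
    let ?n = "int m + 1"
    have "xs ?n = zpow f (int m) z" by (simp add: xs_def)
    also have "\<dots> = zpow f ?n y" using zpow_S2[OF if1, of "int m" y] fy by simp
    finally have xn: "xs ?n = zpow f ?n y" .
    have "\<bar>zpow f ?n y - orb ?n\<bar> < e (zpow f ?n y)" using x[rule_format, of ?n] xn x0 by (simp add: orb_def)
    moreover have "e (zpow f ?n y) \<le> \<eta> ?n + \<bar>zpow f ?n y - orb ?n\<bar>/2"
      using e(3)[rule_format, of "zpow f ?n y" "orb ?n"] e(2)[rule_format, of ?n] by linarith
    ultimately have "\<bar>zpow f ?n y - orb ?n\<bar> < 2 * \<eta> ?n" by argo
    then have "\<bar>zpow f (- ?n) (zpow f ?n y)\<bar> < 1/(real_of_int \<bar>?n\<bar> + 1)" using \<eta> by blast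
    moreover have "zpow f (- ?n) (zpow f ?n y) = y" by (rule zpow_S3[OF if1])
    moreover have "1/(real_of_int \<bar>?n\<bar> + 1) \<le> 1 / (real m + 1)" by (simp add: frac_le)
    ultimately show ?thesis by simp
  qed
  then have "y = 0" using small_zero by blast
  then show False using y0 by simp
qed



lemma gap_lemma:
  fixes h :: "real \<Rightarrow> real"
  assumes "mono h" "\<forall>n. (h ^^ n) a \<in> {p..q}" "0 < m"
  shows "\<exists>N. \<forall>n\<ge>N. \<bar>(h ^^ Suc n) a - (h ^^ n) a\<bar> < m"
proof -
  let ?b = "\<lambda>n. (h ^^ n) a"
  have bn: "\<And>n. p \<le> ?b n \<and> ?b n \<le> q" using assms(2) by auto
  have "Bseq ?b"
  proof (rule BseqI')
    fix n show "norm (?b n) \<le> \<bar>p\<bar> + \<bar>q\<bar>" using bn[of n] unfolding real_norm_def by argo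
  qed
  then have "convergent ?b" using funpow_monoseq[OF assms(1)] Bseq_monoseq_convergent by blast
  then obtain L where L: "?b \<longlonglongrightarrow> L" by (auto simp: convergent_def)
  then have "(\<lambda>n. ?b (Suc n)) \<longlonglongrightarrow> L" by (rule LIMSEQ_Suc)
  then have "(\<lambda>n. ?b (Suc n) - ?b n) \<longlonglongrightarrow> L - L" using L by (rule tendsto_diff)
  then have "(\<lambda>n. ?b (Suc n) - ?b n) \<longlonglongrightarrow> 0" by simp
  from LIMSEQ_D[OF this assms(3)] show ?thesis by simp
qed

lemma unique_incr:
  fixes f g :: "real \<Rightarrow> real"
  assumes hom: "homeomorphism UNIV UNIV f g"
    and inc: "\<And>u v. u < v \<Longrightarrow> f u < f v"
    and ex: "expansive_var f"
    and pq: "p < q" "f p = p" "f q = q"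
  shows False
proof -
  from hom have gf: "\<And>x. g (f x) = x" and fg: "\<And>y. f (g y) = y"
    and cf: "continuous_on UNIV f" and cg: "continuous_on UNIV g"
    by (auto simp: homeomorphism_def)
  have ig: "inv f = g" using gf fg by (rule inv_equality)
  have if1: "\<And>x. inv f (f x) = x" "\<And>y. f (inv f y) = y" using ig gf fg by auto
  have ginc: "g u < g v" if "u < v" for u v
  proof (rule ccontr)
    assume "\<not> g u < g v"
    then have "g v \<le> g u" by simp
    then have "f (g v) \<le> f (g u)" using inc by (cases "g v = g u") (auto simp: less_imp_le)
    then show False using that fg by simp
  qed
  have mf: "mono f" unfolding mono_def using inc by (metis less_eq_real_def)
  have mg: "mono g" unfolding mono_def using ginc by (metis less_eq_real_def)
  have cz: "\<And>k. continuous_on UNIV (zpow f k)" using zpow_cont cf cg ig by simp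
  obtain e where e: "pos_cont e" "\<forall>x y. x \<noteq> y \<longrightarrow> (\<exists>k::int. \<bar>zpow f k x - zpow f k y\<bar> > e (zpow f k x))"
    using ex unfolding expansive_var_def by blast
  have ce: "continuous_on {p..q} e" using e(1) unfolding pos_cont_def by (auto intro: continuous_on_subset)
  obtain xm where xm: "xm \<in> {p..q}" "\<forall>v\<in>{p..q}. e xm \<le> e v"
    using continuous_attains_inf[OF compact_Icc _ ce] pq by auto
  define m where "m = e xm"
  have m0: "0 < m" using e(1) by (simp add: pos_cont_def m_def)
  have me: "v \<in> {p..q} \<Longrightarrow> m \<le> e v" for v using xm by (simp add: m_def)
  have zmono: "zpow f k u < zpow f k v" if "u < v" for k u v
    using funpow_smono[OF inc that] funpow_smono[OF ginc that] by (simp add: zpow_def ig)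
  have zle: "zpow f k u \<le> zpow f k v" if "u \<le> v" for k u v
    using zmono[of u v k] that by (cases "u = v") auto
  have gfix: "g r = r" if "f r = r" for r using gf[of r] that by simp
  have zfix: "zpow f k r = r" if "f r = r" for k r
    using funpow_fix[of f r] funpow_fix[of g r] that gfix[OF that] by (simp add: zpow_def ig)
  have zin: "zpow f k v \<in> {p..q}" if "v \<in> {p..q}" for k v
    using zle[of p v k] zle[of v q k] that zfix[OF pq(2)] zfix[OF pq(3)] by auto
  show False
  proof (cases "\<forall>v\<in>{p..q}. f v = v")
    case True
    define y where "y = p + min m (q - p) / 2"
    have y1: "p < y" "y \<le> q" "\<bar>p - y\<bar> < m" using pq m0 unfolding y_def by argo+
    then have y: "y \<in> {p..q}" "y \<noteq> p" "\<bar>p - y\<bar> < m" by auto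
    obtain k where "\<bar>zpow f k p - zpow f k y\<bar> > e (zpow f k p)" using e(2) y by metis
    then have "\<bar>p - y\<bar> > e p" using zfix True y pq by simp
    then show False using me[of p] y pq by simp
  next
    case False
    then obtain x where x: "x \<in> {p..q}" "f x \<noteq> x" by blast
    have fin: "\<forall>n. (f ^^ n) x \<in> {p..q}" using zin[OF x(1), of "int _"] by (simp add: zpow_def)
    have gin: "\<forall>n. (g ^^ n) x \<in> {p..q}"
    proof
      fix n
      have "zpow f (- int n) x = (g ^^ n) x" by (cases "n = 0") (simp_all add: zpow_def ig)
      then show "(g ^^ n) x \<in> {p..q}" using zin[OF x(1), of "- int n"] by simp
    qed
    obtain N1 where N1: "\<forall>n\<ge>N1. \<bar>(f ^^ Suc n) x - (f ^^ n) x\<bar> < m" using gap_lemma[OF mf fin m0] by blast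
    obtain N2 where N2: "\<forall>n\<ge>N2. \<bar>(g ^^ Suc n) x - (g ^^ n) x\<bar> < m" using gap_lemma[OF mg gin m0] by blast
    define FF where "FF = {k::int. - int N2 - 1 < k \<and> k < int N1}"
    have fFF: "finite FF" by (rule finite_subset[of _ "{- int N2 - 1 .. int N1}"]) (auto simp: FF_def)
    have gap: "\<bar>zpow f (k+1) x - zpow f k x\<bar> < m" if "k \<notin> FF" for k
    proof (cases "int N1 \<le> k")
      case True
      then have "nat (k+1) = Suc (nat k)" "N1 \<le> nat k" "0 \<le> k" by auto
      then show ?thesis using N1 by (simp add: zpow_def)
    next
      case False
      then have k: "k \<le> - int N2 - 1" using that by (auto simp: FF_def)
      define j where "j = nat (-k-1)"
      have j: "k = - int j - 1" "N2 \<le> j" using k by (auto simp: j_def)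
      have "nat (-k) = Suc j" "\<not> 0 \<le> k" using j by auto
      then have "zpow f k x = (g ^^ Suc j) x" by (simp only: zpow_def ig if_False)
      moreover have "zpow f (k+1) x = (g ^^ j) x"
      proof (cases "j = 0")
        case True then show ?thesis using j by simp
      next
        case False
        then have "nat (-(k+1)) = j" "\<not> 0 \<le> k+1" using j by auto
        then show ?thesis by (simp only: zpow_def ig if_False)
      qed
      ultimately show ?thesis using N2 j by (simp add: abs_minus_commute)
    qed
    have "\<forall>k\<in>FF. eventually (\<lambda>y. \<bar>zpow f k y - zpow f k x\<bar> < m) (at x)"
    proof
      fix k
      have "isCont (zpow f k) x" using cz[of k] by (simp add: continuous_on_eq_continuous_at)
      then have "(zpow f k \<longlongrightarrow> zpow f k x) (at x)" by (simp add: isCont_def)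
      from tendstoD[OF this m0] show "eventually (\<lambda>y. \<bar>zpow f k y - zpow f k x\<bar> < m) (at x)"
        by (simp add: dist_real_def)
    qed
    from eventually_ball_finite[OF fFF this]
    obtain d where d: "d > 0" "\<forall>y. y \<noteq> x \<and> dist y x < d \<longrightarrow> (\<forall>k\<in>FF. \<bar>zpow f k y - zpow f k x\<bar> < m)"
      unfolding eventually_at by auto
    define c where "c = f x"
    have cx: "c \<noteq> x" using x by (simp add: c_def)
    define t where "t = min (1/2) (d / (2 * \<bar>c - x\<bar>))"
    have dpos: "0 < d / (2 * \<bar>c - x\<bar>)" using d cx by simp
    have t: "0 < t" "t \<le> 1/2" unfolding t_def using dpos by (simp, simp only: min.cobounded1)
    have "t * \<bar>c - x\<bar> \<le> d / 2"
    proof -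
      have "t * \<bar>c - x\<bar> \<le> (d / (2 * \<bar>c - x\<bar>)) * \<bar>c - x\<bar>" by (intro mult_right_mono) (auto simp: t_def)
      also have "\<dots> = d/2" using cx by simp
      finally show ?thesis .
    qed
    define y where "y = x + (c - x) * t"
    have yx: "y \<noteq> x" using t cx by (simp add: y_def)
    have ydist: "dist y x < d" using \<open>t * \<bar>c - x\<bar> \<le> d / 2\<close> d t
      by (simp add: y_def dist_real_def abs_mult mult.commute)
    have btw: "(x < y \<and> y < c) \<or> (c < y \<and> y < x)"
    proof (cases "x < c")
      case True
      have "0 < (c - x) * t" "(c - x) * t < c - x" using True t by (auto simp: mult_pos_pos)
      then show ?thesis by (simp add: y_def)
    next
      case False
      then have "c < x" using cx by simp
      then have "(c - x) * t < 0" "c - x < (c - x) * t" using t by (auto simp: mult_neg_pos)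
      then show ?thesis by (simp add: y_def)
    qed
    have close: "\<bar>zpow f k y - zpow f k x\<bar> < m" for k
    proof (cases "k \<in> FF")
      case True then show ?thesis using d yx ydist by blast
    next
      case False
      have zc: "zpow f k c = zpow f (k+1) x" unfolding c_def by (rule zpow_S2[OF if1])
      have "\<bar>zpow f k y - zpow f k x\<bar> < \<bar>zpow f (k+1) x - zpow f k x\<bar>"
        using btw zmono[of x y k] zmono[of y c k] zmono[of c y k] zmono[of y x k] zc by auto
      then show ?thesis using gap[OF False] by simp
    qed
    obtain k where "\<bar>zpow f k x - zpow f k y\<bar> > e (zpow f k x)" using e(2) yx by metis
    moreover have "m \<le> e (zpow f k x)" using me zin[OF x(1)] by blast
    ultimately show False using close[of k] by (simp add: abs_minus_commute)
  qed
qed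



theorem mainTheorem15:
  fixes f :: "real \<Rightarrow> real"
  assumes "topologically_anosov f"
  shows "\<exists>!p. f p = p"
proof -
  from assms obtain g where hom: "homeomorphism UNIV UNIV f g"
    unfolding topologically_anosov_def homeo_R_def by blast
  have ex: "expansive_var f" and sh: "shadowing_var f"
    using assms unfolding topologically_anosov_def by auto
  from hom have gf: "\<And>x. g (f x) = x" and cf: "continuous_on UNIV f"
    by (auto simp: homeomorphism_def)
  have injf: "inj f" by (metis gf injI)
  show ?thesis
  proof (cases "f 0 < f 1")
    case True
    have inc: "\<And>u v. u < v \<Longrightarrow> f u < f v" using cont_inj_incr[OF cf injf True] by blast
    obtain p where p: "f p = p" using exist_incr[OF hom inc sh] by blast
    show ?thesis
    proof (rule ex1I[of _ p])
      show "f p = p" by (rule p)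
    next
      fix q assume q: "f q = q"
      show "q = p"
      proof (rule ccontr)
        assume "q \<noteq> p"
        then consider "p < q" | "q < p" by linarith
        then show False
        proof cases
          case 1 then show False using unique_incr[OF hom inc ex 1 p q] by blast
        next
          case 2 then show False using unique_incr[OF hom inc ex 2 q p] by blast
        qed
      qed
    qed
  next
    case False
    have "f 0 \<noteq> f 1" using injf by (metis inj_eq zero_neq_one)
    then have "- f 0 < - f 1" using False by simp
    moreover have "continuous_on UNIV (\<lambda>x. - f x)" using cf by (intro continuous_intros)
    moreover have "inj (\<lambda>x. - f x)" using injf by (simp add: inj_def)
    ultimately have dec: "\<And>u v. u < v \<Longrightarrow> f v < f u"
      using cont_inj_incr[of "\<lambda>x. - f x"] by fastforce
    have decle: "\<And>u v. u \<le> v \<Longrightarrow> f v \<le> f u" using dec by (metis less_eq_real_def)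
    define h where "h x = f x - x" for x
    have ch: "continuous_on {a..b} h" for a b unfolding h_def
      by (intro continuous_intros continuous_on_subset[OF cf]) auto
    have "\<exists>p. h p = 0"
    proof (cases "0 \<le> f 0")
      case True
      have "h (f 0) \<le> 0" "0 \<le> h 0" using decle[OF True] True by (auto simp: h_def)
      then show ?thesis using IVT2'[of h "f 0" 0 0, OF _ _ True ch] by auto
    next
      case False
      have "f 0 < f (f 0)" using dec False by simp
      then have "h 0 \<le> 0" "0 \<le> h (f 0)" using False by (auto simp: h_def)
      then show ?thesis using IVT2'[of h 0 0 "f 0", OF _ _ _ ch] False by auto
    qed
    then obtain p where p: "f p = p" by (auto simp: h_def)
    show ?thesis
    proof (rule ex1I[of _ p])
      show "f p = p" by (rule p)
    next
      fix q assume q: "f q = q"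
      show "q = p"
      proof (rule ccontr)
        assume "q \<noteq> p"
        then consider "p < q" | "q < p" by linarith
        then show False
        proof cases
          case 1 then show False using dec[OF 1] p q by simp
        next
          case 2 then show False using dec[OF 2] p q by simp
        qed
      qed
    qed
  qed
qed

end
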